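(* Let $G(n,n_1,n_2,n_3,p_1,p_2,p_3)$ be a three-layer stochastic block model network satisfying the standing assumptions below. Fix any one of the three layers as target layer, and apply ReduceEdge to all communities of the other two layers. Then the (expected) modularity of the target layer's partition in the resulting graph is strictly larger than in the original graph.
   Context: Multi-layer stochastic block model $G(n,n_1,\dots,n_L,p_1,\dots,p_L)$: a random graph on $n$ nodes with $L$ layers. For each layer $l$ the nodes are partitioned into $n_l$ planted communities of size $s_l=n/n_l$; independently for each layer, each pair of distinct nodes in a common community of layer $l$ receives an edge from layer $l$ with probability $p_l$; the graph is the simple union of all generated edges, so a pair lying in a common community of exactly the layers in a set $T$ is an edge with probability $1-\prod_{l\in T}(1-p_l)$. The partitions of different layers are independent: for any $k\ge2$ distinct layers and one community from each, their intersection has $n/(n_{l_1}\cdots n_{l_k})$ nodes (in expectation). Standing assumptions: $n_l\ge4$, $p_l\in[0.05,1]$ for every layer, and $n\ge2\prod_l n_l$. ReduceEdge on a layer $l$: for a community $i$ of layer $l$ with size $s_l$, $e^i_{ll}$ internal edges and $e^i_{lout}$ outgoing edges (edges with exactly one endpoint in $i$), set $\widehat{p^i_l}=e^i_{ll}/(\tfrac12 s_l(s_l-1))$, $\widehat{q^i_l}=e^i_{lout}/(s_l(n-s_l))$ and $q^i_l=\widehat{q^i_l}/\widehat{p^i_l}$; each internal edge of community $i$ is kept independently with probability $q^i_l$ (removed with probability $1-q^i_l$). In the model these quantities are computed from expected edge counts, giving a common retention probability $q_l$ for all communities of layer $l$; when two layers are reduced, an edge internal to communities of both is kept with probability equal to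 the product of the two retention probabilities. Modularity of a layer $l$: for a graph with $e$ edges, $Q_l=\sum_i\big(\frac{e^i_{ll}}{e}-(\frac{d^i_l}{2e})^2\big)$ with $d^i_l=2e^i_{ll}+e^i_{lout}$, all edge counts being replaced by their expected values. *)

theory Defs
  imports "HOL-Analysis.Analysis"
begin

text \<open>Layers are natural-number indices in a finite set Ls; nl l is the number of
  communities of layer l; p l its edge probability; n the number of nodes
  (taken as a real, all counts are expected values).\<close>

text \<open>Expected number of unordered pairs of distinct nodes lying in a common
  community of every layer of S: the common-community cells have size n / P,
  with P the product of the nl l over S, and there are P of them.\<close>
definition allpairs :: "real \<Rightarrow> (nat \<Rightarrow> nat) \<Rightarrow> nat set \<Rightarrow> real" where
  "allpairs n nl S = (let P = (\<Prod>l\<in>S. real (nl l)) in P * (n / P) * (n / P - 1) / 2)"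

text \<open>Expected number of pairs lying in a common community of exactly the
  layers of T (inclusion-exclusion).\<close>
definition exactpairs :: "real \<Rightarrow> (nat \<Rightarrow> nat) \<Rightarrow> nat set \<Rightarrow> nat set \<Rightarrow> real" where
  "exactpairs n nl Ls T =
     (\<Sum>S\<in>{S. T \<subseteq> S \<and> S \<subseteq> Ls}. (-1) ^ (card S - card T) * allpairs n nl S)"

text \<open>Edge probability of a pair whose exact common-community layer set is T.\<close>
definition edgeprob :: "(nat \<Rightarrow> real) \<Rightarrow> nat set \<Rightarrow> real" where
  "edgeprob p T = 1 - (\<Prod>l\<in>T. 1 - p l)"

definition e_total :: "real \<Rightarrow> (nat \<Rightarrow> nat) \<Rightarrow> nat set \<Rightarrow> (nat set \<Rightarrow> real) \<Rightarrow> real" where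
  "e_total n nl Ls w = (\<Sum>T\<in>Pow Ls. exactpairs n nl Ls T * w T)"

definition e_in :: "real \<Rightarrow> (nat \<Rightarrow> nat) \<Rightarrow> nat set \<Rightarrow> (nat set \<Rightarrow> real) \<Rightarrow> nat \<Rightarrow> real" where
  "e_in n nl Ls w l = (\<Sum>T\<in>{T\<in>Pow Ls. l \<in> T}. exactpairs n nl Ls T * w T) / real (nl l)"

definition e_out :: "real \<Rightarrow> (nat \<Rightarrow> nat) \<Rightarrow> nat set \<Rightarrow> (nat set \<Rightarrow> real) \<Rightarrow> nat \<Rightarrow> real" where
  "e_out n nl Ls w l = 2 * (\<Sum>T\<in>{T\<in>Pow Ls. l \<notin> T}. exactpairs n nl Ls T * w T) / real (nl l)"

definition retention :: "real \<Rightarrow> (nat \<Rightarrow> nat) \<Rightarrow> nat set \<Rightarrow> (nat \<Rightarrow> real) \<Rightarrow> nat \<Rightarrow> real" where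
  "retention n nl Ls p l =
     (let s = n / real (nl l);
          phat = e_in n nl Ls (edgeprob p) l / (s * (s - 1) / 2);
          qhat = e_out n nl Ls (edgeprob p) l / (s * (n - s))
      in qhat / phat)"

text \<open>Edge probability after applying ReduceEdge to all communities of the
  layers in R: an edge internal to communities of the layers T \<inter> R is kept
  with the product of their retention probabilities.\<close>
definition reduced_edgeprob ::
  "real \<Rightarrow> (nat \<Rightarrow> nat) \<Rightarrow> nat set \<Rightarrow> (nat \<Rightarrow> real) \<Rightarrow> nat set \<Rightarrow> nat set \<Rightarrow> real" where
  "reduced_edgeprob n nl Ls p R T =
     edgeprob p T * (\<Prod>l\<in>T \<inter> R. retention n nl Ls p l)"

text \<open>Expected modularity of the partition of layer l (all nl l communities
  have the same expected counts).\<close>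
definition modularity ::
  "real \<Rightarrow> (nat \<Rightarrow> nat) \<Rightarrow> nat set \<Rightarrow> (nat set \<Rightarrow> real) \<Rightarrow> nat \<Rightarrow> real" where
  "modularity n nl Ls w l =
     (\<Sum>i<nl l. e_in n nl Ls w l / e_total n nl Ls w
        - ((2 * e_in n nl Ls w l + e_out n nl Ls w l) / (2 * e_total n nl Ls w)) ^ 2)"

end

theory Submission
  imports Defs
begin


lemma allpairs_eq:
  assumes "finite S" "\<forall>l\<in>S. nl l > 0"
  shows "allpairs N nl S = N^2/2 * (\<Prod>l\<in>S. 1 / real (nl l)) - N/2"
proof -
  have P: "(\<Prod>l\<in>S. real (nl l)) > 0" using assms by (intro prod_pos) auto
  have "(\<Prod>l\<in>S. 1 / real (nl l)) = 1 / (\<Prod>l\<in>S. real (nl l))"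
    by (simp add: prod_dividef)
  then show ?thesis using P unfolding allpairs_def Let_def
    by (simp add: field_simps power2_eq_square)
qed

lemma exactpairs_eq:
  assumes fin: "finite Ls" and T: "T \<subseteq> Ls" and pos: "\<forall>l\<in>Ls. nl l > 0"
  shows "exactpairs N nl Ls T = N^2/2 * (\<Prod>l\<in>T. 1 / real (nl l)) * (\<Prod>l\<in>Ls - T. 1 - 1 / real (nl l))
            - (if T = Ls then N/2 else 0)"
proof -
  let ?u = "\<lambda>l. 1 / real (nl l)"
  have finT: "finite T" using fin T finite_subset by blast
  have set: "{S. T \<subseteq> S \<and> S \<subseteq> Ls} = (\<lambda>U. T \<union> U) ` Pow (Ls - T)" using T by auto
  have inj: "inj_on (\<lambda>U. T \<union> U) (Pow (Ls - T))" by (auto simp: inj_on_def)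
  have "exactpairs N nl Ls T = (\<Sum>U\<in>Pow (Ls - T). (-1) ^ (card (T \<union> U) - card T) * allpairs N nl (T \<union> U))"
    unfolding exactpairs_def set sum.reindex[OF inj] by simp
  also have "\<dots> = (\<Sum>U\<in>Pow (Ls - T). N^2/2 * prod ?u T * ((-1) ^ card U * prod ?u U) - N/2 * (-1) ^ card U)"
  proof (rule sum.cong[OF refl])
    fix U assume U: "U \<in> Pow (Ls - T)"
    have finU: "finite U" using U fin by (auto intro: finite_subset)
    have dis: "T \<inter> U = {}" using U by auto
    have c: "card (T \<union> U) - card T = card U" using card_Un_disjoint[OF finT finU dis] by simp
    have pr: "prod ?u (T \<union> U) = prod ?u T * prod ?u U" using prod.union_disjoint[OF finT finU dis] .
    have ap: "allpairs N nl (T \<union> U) = N^2/2 * prod ?u (T \<union> U) - N/2"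
      by (rule allpairs_eq) (use finT finU U T pos in auto)
    show "(-1) ^ (card (T \<union> U) - card T) * allpairs N nl (T \<union> U) = N^2/2 * prod ?u T * ((-1) ^ card U * prod ?u U) - N/2 * (-1) ^ card U"
      unfolding c ap pr by (simp add: algebra_simps)
  qed
  also have "\<dots> = N^2/2 * prod ?u T * (\<Sum>U\<in>Pow (Ls - T). (-1) ^ card U * prod ?u U) - N/2 * (\<Sum>U\<in>Pow (Ls - T). (-1) ^ card U)"
    by (simp add: sum_subtractf sum_distrib_left)
  also have "(\<Sum>U\<in>Pow (Ls - T). (-1) ^ card U * prod ?u U) = (\<Prod>l\<in>Ls - T. 1 - ?u l)"
    using prod_diff_conv_sum[of "Ls - T" "\<lambda>_. 1" ?u] fin by simp
  also have "(\<Sum>U\<in>Pow (Ls - T). (-1::real) ^ card U) = (\<Prod>l\<in>Ls - T. 1 - 1)"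
    using prod_diff_conv_sum[of "Ls - T" "\<lambda>_. 1::real" "\<lambda>_. 1"] fin by simp
  also have "(\<Prod>l\<in>Ls - T. 1 - 1::real) = (if T = Ls then 1 else 0)"
    using T fin by (auto simp: prod_zero_iff)
  finally show ?thesis by simp
qed


lemma sum_Pow_insert:
  assumes "finite A" "x \<notin> A"
  shows "(\<Sum>S\<in>Pow (insert x A). g S) = (\<Sum>S\<in>Pow A. g S) + (\<Sum>S\<in>Pow A. g (insert x S))"
proof -
  have inj: "inj_on (insert x) (Pow A)" unfolding inj_on_def by (metis Diff_insert_absorb PowD subsetD assms(2))
  have "(\<Sum>S\<in>Pow (insert x A). g S) = (\<Sum>S\<in>Pow A. g S) + (\<Sum>S\<in>insert x ` Pow A. g S)"
    unfolding Pow_insert by (rule sum.union_disjoint) (use assms in auto)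
  also have "(\<Sum>S\<in>insert x ` Pow A. g S) = (\<Sum>S\<in>Pow A. g (insert x S))"
    by (rule sum.reindex[OF inj, unfolded comp_def])
  finally show ?thesis .
qed

lemma sum_Pow3:
  assumes "t \<noteq> a" "t \<noteq> b" "a \<noteq> b"
  shows "(\<Sum>T\<in>Pow {t,a,b}. g T) = g {} + g {b} + g {a} + g {a,b} + g {t} + g {t,b} + g {t,a} + g {t,a,b}"
  using assms by (simp add: sum_Pow_insert add.assoc)

lemma split_in:
  assumes "t \<noteq> a" "t \<noteq> b" "a \<noteq> b"
  shows "(\<Sum>T\<in>{T\<in>Pow {t,a,b}. t \<in> T}. g T) = g {t} + g {t,b} + g {t,a} + g {t,a,b}"
proof -
  have "(\<Sum>T\<in>{T\<in>Pow {t,a,b}. t \<in> T}. g T) = (\<Sum>T\<in>Pow {t,a,b}. if t \<in> T then g T else 0)"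
    using sum.inter_filter[of "Pow {t,a,b}" g "\<lambda>T. t \<in> T"] by simp
  also have "\<dots> = g {t} + g {t,b} + g {t,a} + g {t,a,b}"
    unfolding sum_Pow3[OF assms] using assms by simp
  finally show ?thesis .
qed

lemma split_out:
  assumes "t \<noteq> a" "t \<noteq> b" "a \<noteq> b"
  shows "(\<Sum>T\<in>{T\<in>Pow {t,a,b}. t \<notin> T}. g T) = g {} + g {b} + g {a} + g {a,b}"
proof -
  have "(\<Sum>T\<in>{T\<in>Pow {t,a,b}. t \<notin> T}. g T) = (\<Sum>T\<in>Pow {t,a,b}. if t \<notin> T then g T else 0)"
    using sum.inter_filter[of "Pow {t,a,b}" g "\<lambda>T. t \<notin> T"] by simp
  also have "\<dots> = g {} + g {b} + g {a} + g {a,b}"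
    unfolding sum_Pow3[OF assms] using assms by simp
  finally show ?thesis .
qed


lemma split_in_a:
  assumes "t \<noteq> a" "t \<noteq> b" "a \<noteq> b"
  shows "(\<Sum>T\<in>{T\<in>Pow {t,a,b}. a \<in> T}. g T) = g {a} + g {a,b} + g {t,a} + g {t,a,b}"
proof -
  have "(\<Sum>T\<in>{T\<in>Pow {t,a,b}. a \<in> T}. g T) = (\<Sum>T\<in>Pow {t,a,b}. if a \<in> T then g T else 0)"
    using sum.inter_filter[of "Pow {t,a,b}" g "\<lambda>T. a \<in> T"] by simp
  also have "\<dots> = g {a} + g {a,b} + g {t,a} + g {t,a,b}"
    unfolding sum_Pow3[OF assms] using assms by simp
  finally show ?thesis .
qed

lemma split_out_a:
  assumes "t \<noteq> a" "t \<noteq> b" "a \<noteq> b"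
  shows "(\<Sum>T\<in>{T\<in>Pow {t,a,b}. a \<notin> T}. g T) = g {} + g {b} + g {t} + g {t,b}"
proof -
  have "(\<Sum>T\<in>{T\<in>Pow {t,a,b}. a \<notin> T}. g T) = (\<Sum>T\<in>Pow {t,a,b}. if a \<notin> T then g T else 0)"
    using sum.inter_filter[of "Pow {t,a,b}" g "\<lambda>T. a \<notin> T"] by simp
  also have "\<dots> = g {} + g {b} + g {t} + g {t,b}"
    unfolding sum_Pow3[OF assms] using assms by simp
  finally show ?thesis .
qed

lemma split_in_b:
  assumes "t \<noteq> a" "t \<noteq> b" "a \<noteq> b"
  shows "(\<Sum>T\<in>{T\<in>Pow {t,a,b}. b \<in> T}. g T) = g {b} + g {a,b} + g {t,b} + g {t,a,b}"
proof -
  have "(\<Sum>T\<in>{T\<in>Pow {t,a,b}. b \<in> T}. g T) = (\<Sum>T\<in>Pow {t,a,b}. if b \<in> T then g T else 0)"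
    using sum.inter_filter[of "Pow {t,a,b}" g "\<lambda>T. b \<in> T"] by simp
  also have "\<dots> = g {b} + g {a,b} + g {t,b} + g {t,a,b}"
    unfolding sum_Pow3[OF assms] using assms by simp
  finally show ?thesis .
qed

lemma split_out_b:
  assumes "t \<noteq> a" "t \<noteq> b" "a \<noteq> b"
  shows "(\<Sum>T\<in>{T\<in>Pow {t,a,b}. b \<notin> T}. g T) = g {} + g {a} + g {t} + g {t,a}"
proof -
  have "(\<Sum>T\<in>{T\<in>Pow {t,a,b}. b \<notin> T}. g T) = (\<Sum>T\<in>Pow {t,a,b}. if b \<notin> T then g T else 0)"
    using sum.inter_filter[of "Pow {t,a,b}" g "\<lambda>T. b \<notin> T"] by simp
  also have "\<dots> = g {} + g {a} + g {t} + g {t,a}"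
    unfolding sum_Pow3[OF assms] using assms by simp
  finally show ?thesis .
qed

lemma e_total_split:
  assumes "finite Ls"
  shows "e_total N nl Ls w =
    (\<Sum>T\<in>{T\<in>Pow Ls. l \<in> T}. exactpairs N nl Ls T * w T) + (\<Sum>T\<in>{T\<in>Pow Ls. l \<notin> T}. exactpairs N nl Ls T * w T)"
proof -
  let ?f = "\<lambda>T. exactpairs N nl Ls T * w T"
  have "e_total N nl Ls w = (\<Sum>T\<in>Pow Ls. (if l \<in> T then ?f T else 0) + (if l \<notin> T then ?f T else 0))"
    unfolding e_total_def by (intro sum.cong) auto
  also have "\<dots> = (\<Sum>T\<in>Pow Ls. (if l \<in> T then ?f T else 0)) + (\<Sum>T\<in>Pow Ls. (if l \<notin> T then ?f T else 0))"
    by (rule sum.distrib)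
  also have "\<dots> = (\<Sum>T\<in>{T\<in>Pow Ls. l \<in> T}. ?f T) + (\<Sum>T\<in>{T\<in>Pow Ls. l \<notin> T}. ?f T)"
    using assms sum.inter_filter[of "Pow Ls" ?f "\<lambda>T. l \<in> T"] sum.inter_filter[of "Pow Ls" ?f "\<lambda>T. l \<notin> T"] by simp
  finally show ?thesis .
qed

lemma modularity_eq:
  assumes "finite Ls" "nl l > 0"
    and "(\<Sum>T\<in>{T\<in>Pow Ls. l \<in> T}. exactpairs N nl Ls T * w T) = I"
    and "(\<Sum>T\<in>{T\<in>Pow Ls. l \<notin> T}. exactpairs N nl Ls T * w T) = Out"
    and "I + Out \<noteq> 0"
  shows "modularity N nl Ls w l = I / (I + Out) - 1 / real (nl l)"
proof -
  have E: "e_total N nl Ls w = I + Out" using e_total_split[OF assms(1), of N nl w l] assms by simp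
  have ei: "e_in N nl Ls w l = I / real (nl l)" unfolding e_in_def using assms by simp
  have eo: "e_out N nl Ls w l = 2 * Out / real (nl l)" unfolding e_out_def using assms by simp
  have r: "(2 * (I / real (nl l)) + 2 * Out / real (nl l)) / (2 * (I + Out)) = 1 / real (nl l)"
  proof -
    have h: "(I + Out) * (real (nl l) * 2) \<noteq> 0" using assms(2,5) by simp
    have h2: "I * (real (nl l) * 2) + Out * (real (nl l) * 2) \<noteq> 0" using h by (simp add: algebra_simps)
    show ?thesis using assms(2,5) h h2 by (simp add: field_simps)
  qed
  have "modularity N nl Ls w l = real (nl l) * ((I / real (nl l)) / (I + Out) - (1 / real (nl l))^2)"
    unfolding modularity_def E ei eo r by simp
  also have "\<dots> = I / (I + Out) - 1 / real (nl l)"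
  proof -
    have n0: "real (nl l) \<noteq> 0" using assms(2) by simp
    have a1: "real (nl l) * (I / real (nl l) / (I + Out)) = I / (I + Out)" using n0 by simp
    have a2: "real (nl l) * (1 / real (nl l))^2 = 1 / real (nl l)" using n0 by (simp add: power2_eq_square)
    show ?thesis unfolding right_diff_distrib a1 a2 ..
  qed
  finally show ?thesis .
qed

lemma retention_eq:
  assumes "finite Ls" "nl l > 0"
    and "(\<Sum>T\<in>{T\<in>Pow Ls. l \<in> T}. exactpairs N nl Ls T * edgeprob p T) = I"
    and "(\<Sum>T\<in>{T\<in>Pow Ls. l \<notin> T}. exactpairs N nl Ls T * edgeprob p T) = Out"
    and "I \<noteq> 0" "N / real (nl l) \<noteq> 0" "N / real (nl l) \<noteq> 1" "N / real (nl l) \<noteq> N"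
  shows "retention N nl Ls p l = Out * (N / real (nl l) - 1) / (I * (N - N / real (nl l)))"
proof -
  have ei: "e_in N nl Ls (edgeprob p) l = I / real (nl l)" unfolding e_in_def using assms by simp
  have eo: "e_out N nl Ls (edgeprob p) l = 2 * Out / real (nl l)" unfolding e_out_def using assms by simp
  have "N / real (nl l) - 1 \<noteq> 0" "N - N / real (nl l) \<noteq> 0" using assms by auto
  then show ?thesis unfolding retention_def Let_def ei eo using assms(2,5,6)
    by (simp add: field_simps)
qed

lemma frac_step:
  fixes S0 S1 T0 T1 q :: real
  assumes "T0 > 0" "T1 > 0" "0 < q" "q < 1" "S0 * T1 > S1 * T0"
  shows "(S0 + S1) / (T0 + T1) < (S0 + q * S1) / (T0 + q * T1)"
proof -
  have "q * T1 > 0" using assms by simp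
  then have d1: "T0 + T1 > 0" "T0 + q * T1 > 0" using assms by linarith+
  have "(S0 + q * S1) * (T0 + T1) - (S0 + S1) * (T0 + q * T1) = (1 - q) * (S0 * T1 - S1 * T0)"
    by (simp add: algebra_simps)
  moreover have "(1 - q) * (S0 * T1 - S1 * T0) > 0" using assms by simp
  ultimately have "(S0 + S1) * (T0 + q * T1) < (S0 + q * S1) * (T0 + T1)" by linarith
  then show ?thesis using d1 by (simp add: divide_less_eq less_divide_eq field_simps)
qed

lemma core:
  fixes m100 m010 m001 m110 m101 m011 m111 qa qb :: real
  assumes pos: "m100 > 0" "m010 > 0" "m001 > 0" "m110 > 0" "m101 > 0" "m011 > 0" "m111 > 0"
    and q: "0 < qa" "qa < 1" "0 < qb" "qb < 1"
    and Ha: "(m100 + m101) * (m010 + m011) > (m110 + m111) * m001"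
    and Hb: "(m100 + qa * m110) * (m001 + qa * m011) > (m101 + qa * m111) * (qa * m010)"
  shows "(m100 + m110 + m101 + m111) / ((m100 + m110 + m101 + m111) + (m010 + m001 + m011))
       < (m100 + qa * m110 + qb * m101 + qa * qb * m111) /
         ((m100 + qa * m110 + qb * m101 + qa * qb * m111) + (qa * m010 + qb * m001 + qa * qb * m011))"
proof -
  have qp: "qa * m110 > 0" "qa * m010 > 0" "qa * m011 > 0" "qa * m111 > 0" using pos q by simp_all
  have s1: "((m100 + m101) + (m110 + m111)) / ((m100 + m101 + m001) + (m110 + m111 + m010 + m011))
     < ((m100 + m101) + qa * (m110 + m111)) / ((m100 + m101 + m001) + qa * (m110 + m111 + m010 + m011))"
    apply (rule frac_step)
    subgoal using pos by linarith
    subgoal using pos by linarith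
    subgoal using q by linarith
    subgoal using q by linarith
    subgoal using Ha by (simp add: algebra_simps)
    done
  have s2: "((m100 + qa * m110) + (m101 + qa * m111)) / ((m100 + qa * m110 + qa * m010) + (m101 + qa * m111 + m001 + qa * m011))
     < ((m100 + qa * m110) + qb * (m101 + qa * m111)) / ((m100 + qa * m110 + qa * m010) + qb * (m101 + qa * m111 + m001 + qa * m011))"
    apply (rule frac_step)
    subgoal using pos qp by linarith
    subgoal using pos qp by linarith
    subgoal using q by linarith
    subgoal using q by linarith
    subgoal using Hb by (simp add: algebra_simps)
    done
  have e1: "((m100 + m101) + (m110 + m111)) / ((m100 + m101 + m001) + (m110 + m111 + m010 + m011))
     = (m100 + m110 + m101 + m111) / ((m100 + m110 + m101 + m111) + (m010 + m001 + m011))"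
    by (simp add: algebra_simps)
  have e2: "((m100 + m101) + qa * (m110 + m111)) / ((m100 + m101 + m001) + qa * (m110 + m111 + m010 + m011))
     = ((m100 + qa * m110) + (m101 + qa * m111)) / ((m100 + qa * m110 + qa * m010) + (m101 + qa * m111 + m001 + qa * m011))"
    by (simp add: algebra_simps)
  have e3: "((m100 + qa * m110) + qb * (m101 + qa * m111)) / ((m100 + qa * m110 + qa * m010) + qb * (m101 + qa * m111 + m001 + qa * m011))
     = (m100 + qa * m110 + qb * m101 + qa * qb * m111) /
         ((m100 + qa * m110 + qb * m101 + qa * qb * m111) + (qa * m010 + qb * m001 + qa * qb * m011))"
    by (simp add: algebra_simps)
  show ?thesis using s1 s2 e1 e2 e3 by linarith
qed



lemma w_ineqs:
  fixes pt pa pb :: real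
  assumes "0 \<le> pt" "pt \<le> 1" "0 \<le> pa" "pa \<le> 1" "0 \<le> pb" "pb \<le> 1"
  shows W1: "pt * (1 - (1 - pa) * (1 - pb)) + (1 - (1 - pt) * (1 - pa)) * pb \<ge> (1 - (1 - pt) * (1 - pb)) * pa"
    and W2: "(1 - (1 - pt) * (1 - pa)) * (1 - (1 - pa) * (1 - pb)) \<ge> (1 - (1 - pt) * (1 - pa) * (1 - pb)) * pa"
    and W3: "pt * (1 - (1 - pa) * (1 - pb)) + (1 - (1 - pt) * (1 - pb)) * pa \<ge> (1 - (1 - pt) * (1 - pa)) * pb"
    and W4: "(1 - (1 - pt) * (1 - pb)) * (1 - (1 - pa) * (1 - pb)) \<ge> (1 - (1 - pt) * (1 - pa) * (1 - pb)) * pb"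
proof -
  have pp: "pa * pb \<le> pa" "pa * pb \<le> pb" using assms by (simp_all add: mult_left_le mult_left_le_one_le)
  have a: "1 - (1 - pa) * (1 - pb) \<ge> pa" "1 - (1 - pa) * (1 - pb) \<ge> pb"
    using pp by (simp_all add: algebra_simps)
  have b: "1 - (1 - pt) * (1 - pa) \<ge> pa * (1 - pt)" "1 - (1 - pt) * (1 - pb) \<ge> pb * (1 - pt)"
    using assms by (auto simp: algebra_simps intro: mult_nonneg_nonneg)
  have c1: "pt * (1 - (1 - pa) * (1 - pb)) \<ge> pt * pa" using a assms by (intro mult_left_mono) auto
  have c2: "(1 - (1 - pt) * (1 - pa)) * pb \<ge> pa * (1 - pt) * pb" using b assms by (intro mult_right_mono) auto
  show "pt * (1 - (1 - pa) * (1 - pb)) + (1 - (1 - pt) * (1 - pa)) * pb \<ge> (1 - (1 - pt) * (1 - pb)) * pa"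
    using c1 c2 by (simp add: algebra_simps)
  have c3: "pt * (1 - (1 - pa) * (1 - pb)) \<ge> pt * pb" using a assms by (intro mult_left_mono) auto
  have c4: "(1 - (1 - pt) * (1 - pb)) * pa \<ge> pb * (1 - pt) * pa" using b assms by (intro mult_right_mono) auto
  show "pt * (1 - (1 - pa) * (1 - pb)) + (1 - (1 - pt) * (1 - pb)) * pa \<ge> (1 - (1 - pt) * (1 - pa)) * pb"
    using c3 c4 by (simp add: algebra_simps)
  have "(1 - (1 - pt) * (1 - pa)) * (1 - (1 - pa) * (1 - pb)) - (1 - (1 - pt) * (1 - pa) * (1 - pb)) * pa
      = (1 - pa) * pt * pb" by (simp add: algebra_simps)
  moreover have "(1 - pa) * pt * pb \<ge> 0" using assms by simp
  ultimately show "(1 - (1 - pt) * (1 - pa)) * (1 - (1 - pa) * (1 - pb)) \<ge> (1 - (1 - pt) * (1 - pa) * (1 - pb)) * pa"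
    by linarith
  have "(1 - (1 - pt) * (1 - pb)) * (1 - (1 - pa) * (1 - pb)) - (1 - (1 - pt) * (1 - pa) * (1 - pb)) * pb
      = (1 - pb) * pt * pa" by (simp add: algebra_simps)
  moreover have "(1 - pb) * pt * pa \<ge> 0" using assms by simp
  ultimately show "(1 - (1 - pt) * (1 - pb)) * (1 - (1 - pa) * (1 - pb)) \<ge> (1 - (1 - pt) * (1 - pa) * (1 - pb)) * pb"
    by linarith
qed


lemma main_generic:
  fixes n :: nat and nl :: "nat \<Rightarrow> nat" and p :: "nat \<Rightarrow> real" and t a b :: nat
  assumes dist: "t \<noteq> a" "t \<noteq> b" "a \<noteq> b"
    and nl4: "nl t \<ge> 4" "nl a \<ge> 4" "nl b \<ge> 4"
    and pr: "0.05 \<le> p t" "p t \<le> 1" "0.05 \<le> p a" "p a \<le> 1" "0.05 \<le> p b" "p b \<le> 1"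
    and nbig: "real n \<ge> 2 * real (nl t) * real (nl a) * real (nl b)"
  shows "modularity (real n) nl {t,a,b} (reduced_edgeprob (real n) nl {t,a,b} p {a,b}) t
         > modularity (real n) nl {t,a,b} (edgeprob p) t"
proof -
  define N where "N = real n"
  define ut where "ut = 1 / real (nl t)"
  define ua where "ua = 1 / real (nl a)"
  define ub where "ub = 1 / real (nl b)"
  define pt where "pt = p t"
  define pa where "pa = p a"
  define pb where "pb = p b"
  let ?Ls = "{t,a,b}"
  have fin: "finite ?Ls" by simp
  have pos: "\<forall>l\<in>?Ls. nl l > 0" using nl4 by auto
  have ne: "{t} \<noteq> ?Ls" "{a} \<noteq> ?Ls" "{b} \<noteq> ?Ls" "{t,a} \<noteq> ?Ls" "{t,b} \<noteq> ?Ls" "{a,b} \<noteq> ?Ls" "{} \<noteq> ?Ls"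
    using dist by auto
  have x100: "exactpairs N nl ?Ls {t} = N^2/2 * (ut * (1 - ua) * (1 - ub))"
    using exactpairs_eq[OF fin _ pos, of "{t}" N] dist ne by (simp add: insert_Diff_if flip: ut_def ua_def ub_def; simp add: field_simps)
  have x010: "exactpairs N nl ?Ls {a} = N^2/2 * ((1 - ut) * ua * (1 - ub))"
    using exactpairs_eq[OF fin _ pos, of "{a}" N] dist ne by (simp add: insert_Diff_if flip: ut_def ua_def ub_def; simp add: field_simps)
  have x001: "exactpairs N nl ?Ls {b} = N^2/2 * ((1 - ut) * (1 - ua) * ub)"
    using exactpairs_eq[OF fin _ pos, of "{b}" N] dist ne by (simp add: insert_Diff_if flip: ut_def ua_def ub_def; simp add: field_simps)
  have x110: "exactpairs N nl ?Ls {t,a} = N^2/2 * (ut * ua * (1 - ub))"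
    using exactpairs_eq[OF fin _ pos, of "{t,a}" N] dist ne by (simp add: insert_Diff_if flip: ut_def ua_def ub_def; simp add: field_simps)
  have x101: "exactpairs N nl ?Ls {t,b} = N^2/2 * (ut * (1 - ua) * ub)"
    using exactpairs_eq[OF fin _ pos, of "{t,b}" N] dist ne by (simp add: insert_Diff_if flip: ut_def ua_def ub_def; simp add: field_simps)
  have x011: "exactpairs N nl ?Ls {a,b} = N^2/2 * ((1 - ut) * ua * ub)"
    using exactpairs_eq[OF fin _ pos, of "{a,b}" N] dist ne by (simp add: insert_Diff_if flip: ut_def ua_def ub_def; simp add: field_simps)
  have x111: "exactpairs N nl ?Ls {t,a,b} = N^2/2 * (ut * ua * ub) - N/2"
    using exactpairs_eq[OF fin _ pos, of "{t,a,b}" N] dist by (simp add: algebra_simps flip: ut_def ua_def ub_def)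
  have w000: "edgeprob p {} = 0" by (simp add: edgeprob_def)
  have w100: "edgeprob p {t} = pt" by (simp add: edgeprob_def pt_def)
  have w010: "edgeprob p {a} = pa" by (simp add: edgeprob_def pa_def)
  have w001: "edgeprob p {b} = pb" by (simp add: edgeprob_def pb_def)
  have w110: "edgeprob p {t,a} = 1 - (1 - pt) * (1 - pa)" using dist by (simp add: edgeprob_def pt_def pa_def)
  have w101: "edgeprob p {t,b} = 1 - (1 - pt) * (1 - pb)" using dist by (simp add: edgeprob_def pt_def pb_def)
  have w011: "edgeprob p {a,b} = 1 - (1 - pa) * (1 - pb)" using dist by (simp add: edgeprob_def pa_def pb_def)
  have w111: "edgeprob p {t,a,b} = 1 - (1 - pt) * (1 - pa) * (1 - pb)" using dist by (simp add: edgeprob_def pt_def pa_def pb_def)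
  define qa where "qa = retention N nl ?Ls p a"
  define qb where "qb = retention N nl ?Ls p b"
  have r000: "reduced_edgeprob N nl ?Ls p {a,b} {} = 0" by (simp add: reduced_edgeprob_def w000)
  have r100: "reduced_edgeprob N nl ?Ls p {a,b} {t} = pt" using dist by (simp add: reduced_edgeprob_def w100)
  have r010: "reduced_edgeprob N nl ?Ls p {a,b} {a} = pa * qa" using dist by (simp add: reduced_edgeprob_def w010 qa_def)
  have r001: "reduced_edgeprob N nl ?Ls p {a,b} {b} = pb * qb" using dist by (simp add: reduced_edgeprob_def w001 qb_def)
  have r110: "reduced_edgeprob N nl ?Ls p {a,b} {t,a} = (1 - (1 - pt) * (1 - pa)) * qa" using dist by (simp add: reduced_edgeprob_def w110 qa_def)
  have r101: "reduced_edgeprob N nl ?Ls p {a,b} {t,b} = (1 - (1 - pt) * (1 - pb)) * qb" using dist by (simp add: reduced_edgeprob_def w101 qb_def)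
  have r011: "reduced_edgeprob N nl ?Ls p {a,b} {a,b} = (1 - (1 - pa) * (1 - pb)) * (qa * qb)" using dist by (simp add: reduced_edgeprob_def w011 qa_def qb_def)
  have r111: "reduced_edgeprob N nl ?Ls p {a,b} {t,a,b} = (1 - (1 - pt) * (1 - pa) * (1 - pb)) * (qa * qb)" using dist by (simp add: reduced_edgeprob_def w111 qa_def qb_def Int_insert_left)
  have nt: "real (nl t) \<ge> 4" "real (nl a) \<ge> 4" "real (nl b) \<ge> 4" using nl4 by simp_all
  have u: "0 < ut" "ut \<le> 1/4" "0 < ua" "ua \<le> 1/4" "0 < ub" "ub \<le> 1/4"
    using nt by (simp_all add: ut_def ua_def ub_def field_simps)
  have pp: "0 < pt" "pt \<le> 1" "0 < pa" "pa \<le> 1" "0 < pb" "pb \<le> 1"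
    using pr by (simp_all add: pt_def pa_def pb_def)
  have pge: "pt \<ge> 1/20" "pa \<ge> 1/20" "pb \<ge> 1/20" using pr by (simp_all add: pt_def pa_def pb_def)
  have Npos: "N > 0" using nbig nt unfolding N_def by (smt (verit) mult_pos_pos)
  have Nu: "N * ut * ua * ub \<ge> 2"
  proof -
    have "N * ut * ua * ub = N / (real (nl t) * real (nl a) * real (nl b))"
      by (simp add: ut_def ua_def ub_def)
    moreover have "real (nl t) * real (nl a) * real (nl b) > 0" using nt by simp
    ultimately show ?thesis using nbig unfolding N_def by (simp add: le_divide_eq)
  qed
  have Nua: "N * ua \<ge> 32" "N * ub \<ge> 32"
  proof -
    have tb: "ut * ub \<le> 1/16" "ut * ua \<le> 1/16"
      using mult_mono[of ut "1/4" ub "1/4"] mult_mono[of ut "1/4" ua "1/4"] u by auto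
    have "N * ua * (ut * ub) \<le> N * ua * (1/16)" using tb u Npos by (intro mult_left_mono) auto
    then show "N * ua \<ge> 32" using Nu by (simp add: algebra_simps)
    have "N * ub * (ut * ua) \<le> N * ub * (1/16)" using tb u Npos by (intro mult_left_mono) auto
    then show "N * ub \<ge> 32" using Nu by (simp add: algebra_simps)
  qed
  have Nupa: "N * ua * pa > 1" "N * ub * pb > 1"
  proof -
    have "N * ua * pa \<ge> 32 * pa" using Nua pp by (intro mult_right_mono) auto
    then show "N * ua * pa > 1" using pge by linarith
    have "N * ub * pb \<ge> 32 * pb" using Nua pp by (intro mult_right_mono) auto
    then show "N * ub * pb > 1" using pge by linarith
  qed
  define X100 where "X100 = N^2/2 * (ut * (1 - ua) * (1 - ub))"
  define X010 where "X010 = N^2/2 * ((1 - ut) * ua * (1 - ub))"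
  define X001 where "X001 = N^2/2 * ((1 - ut) * (1 - ua) * ub)"
  define X110 where "X110 = N^2/2 * (ut * ua * (1 - ub))"
  define X101 where "X101 = N^2/2 * (ut * (1 - ua) * ub)"
  define X011 where "X011 = N^2/2 * ((1 - ut) * ua * ub)"
  define X111 where "X111 = N^2/2 * (ut * ua * ub) - N/2"
  define W110 where "W110 = 1 - (1 - pt) * (1 - pa)"
  define W101 where "W101 = 1 - (1 - pt) * (1 - pb)"
  define W011 where "W011 = 1 - (1 - pa) * (1 - pb)"
  define W111 where "W111 = 1 - (1 - pt) * (1 - pa) * (1 - pb)"
  define m100 where "m100 = X100 * pt"
  define m010 where "m010 = X010 * pa"
  define m001 where "m001 = X001 * pb"
  define m110 where "m110 = X110 * W110"
  define m101 where "m101 = X101 * W101"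
  define m011 where "m011 = X011 * W011"
  define m111 where "m111 = X111 * W111"
  have Xpos: "X100 > 0" "X010 > 0" "X001 > 0" "X110 > 0" "X101 > 0" "X011 > 0"
    using u Npos by (simp_all add: X100_def X010_def X001_def X110_def X101_def X011_def)
  have X111pos: "X111 > 0"
  proof -
    have "X111 = N/2 * (N * ut * ua * ub - 1)" by (simp add: X111_def algebra_simps power2_eq_square)
    moreover have "N/2 * (N * ut * ua * ub - 1) > 0" using Nu Npos by (intro mult_pos_pos) auto
    ultimately show ?thesis by simp
  qed
  have Wpos: "W110 > 0" "W101 > 0" "W011 > 0" "W111 > 0"
  proof -
    have l1: "(1 - pt) * (1 - pa) \<le> 1 - pt" "(1 - pt) * (1 - pb) \<le> 1 - pt" "(1 - pa) * (1 - pb) \<le> 1 - pa"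
      using pp by (simp_all add: mult_left_le)
    have l2: "(1 - pt) * (1 - pa) * (1 - pb) \<le> (1 - pt) * (1 - pa)"
      using pp by (intro mult_left_le) (auto intro: mult_nonneg_nonneg)
    have "(1 - pt) * (1 - pa) < 1" "(1 - pt) * (1 - pb) < 1" "(1 - pa) * (1 - pb) < 1"
      using l1 pp by linarith+
    moreover have "(1 - pt) * (1 - pa) * (1 - pb) < 1" using l1 l2 pp by linarith
    ultimately show "W110 > 0" "W101 > 0" "W011 > 0" "W111 > 0"
      by (simp_all add: W110_def W101_def W011_def W111_def)
  qed
  have mpos: "m100 > 0" "m010 > 0" "m001 > 0" "m110 > 0" "m101 > 0" "m011 > 0" "m111 > 0"
    using Xpos X111pos Wpos pp by (simp_all add: m100_def m010_def m001_def m110_def m101_def m011_def m111_def)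
  note xs = x100 x010 x001 x110 x101 x011 x111
  note ws = w000 w100 w010 w001 w110 w101 w011 w111
  note rs = r000 r100 r010 r001 r110 r101 r011 r111
  note Xd = X100_def[symmetric] X010_def[symmetric] X001_def[symmetric] X110_def[symmetric]
    X101_def[symmetric] X011_def[symmetric] X111_def[symmetric]
  note Wd = W110_def[symmetric] W101_def[symmetric] W011_def[symmetric] W111_def[symmetric]
  note md = m100_def m010_def m001_def m110_def m101_def m011_def m111_def
  have It: "(\<Sum>T\<in>{T\<in>Pow ?Ls. t \<in> T}. exactpairs N nl ?Ls T * edgeprob p T) = m100 + m110 + m101 + m111"
    unfolding split_in[OF dist] xs ws Xd Wd md by simp
  have Ot: "(\<Sum>T\<in>{T\<in>Pow ?Ls. t \<notin> T}. exactpairs N nl ?Ls T * edgeprob p T) = m010 + m001 + m011"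
    unfolding split_out[OF dist] xs ws Xd Wd md by simp
  have It': "(\<Sum>T\<in>{T\<in>Pow ?Ls. t \<in> T}. exactpairs N nl ?Ls T * reduced_edgeprob N nl ?Ls p {a,b} T)
       = m100 + qa * m110 + qb * m101 + qa * qb * m111"
    unfolding split_in[OF dist] xs rs Xd Wd md by (simp add: algebra_simps)
  have Ot': "(\<Sum>T\<in>{T\<in>Pow ?Ls. t \<notin> T}. exactpairs N nl ?Ls T * reduced_edgeprob N nl ?Ls p {a,b} T)
       = qa * m010 + qb * m001 + qa * qb * m011"
    unfolding split_out[OF dist] xs rs Xd Wd md by (simp add: algebra_simps)
  have Ia: "(\<Sum>T\<in>{T\<in>Pow ?Ls. a \<in> T}. exactpairs N nl ?Ls T * edgeprob p T) = m010 + m011 + m110 + m111"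
    unfolding split_in_a[OF dist] xs ws Xd Wd md by simp
  have Oa: "(\<Sum>T\<in>{T\<in>Pow ?Ls. a \<notin> T}. exactpairs N nl ?Ls T * edgeprob p T) = m001 + m100 + m101"
    unfolding split_out_a[OF dist] xs ws Xd Wd md by simp
  have Ib: "(\<Sum>T\<in>{T\<in>Pow ?Ls. b \<in> T}. exactpairs N nl ?Ls T * edgeprob p T) = m001 + m011 + m101 + m111"
    unfolding split_in_b[OF dist] xs ws Xd Wd md by simp
  have Ob: "(\<Sum>T\<in>{T\<in>Pow ?Ls. b \<notin> T}. exactpairs N nl ?Ls T * edgeprob p T) = m010 + m100 + m110"
    unfolding split_out_b[OF dist] xs ws Xd Wd md by simp
  have sa: "N / real (nl a) = N * ua" "N / real (nl b) = N * ub" by (simp_all add: ua_def ub_def)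
  have qa_eq: "qa = (m001 + m100 + m101) * (N * ua - 1) / ((m010 + m011 + m110 + m111) * (N - N * ua))"
    unfolding qa_def using retention_eq[OF fin _ Ia Oa] pos mpos Nua u Npos sa by simp
  have qb_eq: "qb = (m010 + m100 + m110) * (N * ub - 1) / ((m001 + m011 + m101 + m111) * (N - N * ub))"
    unfolding qb_def using retention_eq[OF fin _ Ib Ob] pos mpos Nua u Npos sa by simp
  note Xdefs = X100_def X010_def X001_def X110_def X101_def X011_def X111_def
  note Wdefs = W110_def W101_def W011_def W111_def
  have W111le: "1 - W111 \<ge> 0" using pp unfolding W111_def by (simp add: mult_nonneg_nonneg)
  have qa_bounds: "0 < qa" "qa < 1"
  proof -
    define Sk where "Sk = (1-ut)*(1-ub) + ut*(1-ub)*(1-pt) + (1-ut)*ub*(1-pb) + ut*ub*(1-pt)*(1-pb)"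
    have Skpos: "Sk > 0"
    proof -
      have "(1-ut)*(1-ub) > 0" using u by simp
      moreover have "ut*(1-ub)*(1-pt) \<ge> 0" "(1-ut)*ub*(1-pb) \<ge> 0" "ut*ub*(1-pt)*(1-pb) \<ge> 0"
        using u pp by (simp_all add: mult_nonneg_nonneg)
      ultimately show ?thesis unfolding Sk_def by linarith
    qed
    have id: "(m010 + m011 + m110 + m111) * (N - N * ua) - (m001 + m100 + m101) * (N * ua - 1)
       = (1 - ua) * (N^2/2) * ((N * ua * pa - 1) * Sk + (1 - W111))"
      unfolding md Xdefs Wdefs Sk_def by (simp add: field_simps power2_eq_square)
    have rpos: "(1 - ua) * (N^2/2) * ((N * ua * pa - 1) * Sk + (1 - W111)) > 0"
      using u Npos Nupa Skpos W111le by (intro mult_pos_pos add_pos_nonneg) auto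
    have dpos: "(m010 + m011 + m110 + m111) * (N - N * ua) > 0"
    proof -
      have "N - N * ua = N * (1 - ua)" by (simp add: algebra_simps)
      then have "N - N * ua > 0" using Npos u by simp
      then show ?thesis using mpos by simp
    qed
    have npos: "(m001 + m100 + m101) * (N * ua - 1) > 0" using mpos Nua by simp
    show "0 < qa" unfolding qa_eq using dpos npos by simp
    show "qa < 1" unfolding qa_eq using dpos id rpos by simp
  qed
  have qb_bounds: "0 < qb" "qb < 1"
  proof -
    define Sk where "Sk = (1-ut)*(1-ua) + ut*(1-ua)*(1-pt) + (1-ut)*ua*(1-pa) + ut*ua*(1-pt)*(1-pa)"
    have Skpos: "Sk > 0"
    proof -
      have "(1-ut)*(1-ua) > 0" using u by simp
      moreover have "ut*(1-ua)*(1-pt) \<ge> 0" "(1-ut)*ua*(1-pa) \<ge> 0" "ut*ua*(1-pt)*(1-pa) \<ge> 0"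
        using u pp by (simp_all add: mult_nonneg_nonneg)
      ultimately show ?thesis unfolding Sk_def by linarith
    qed
    have id: "(m001 + m011 + m101 + m111) * (N - N * ub) - (m010 + m100 + m110) * (N * ub - 1)
       = (1 - ub) * (N^2/2) * ((N * ub * pb - 1) * Sk + (1 - W111))"
      unfolding md Xdefs Wdefs Sk_def by (simp add: field_simps power2_eq_square)
    have rpos: "(1 - ub) * (N^2/2) * ((N * ub * pb - 1) * Sk + (1 - W111)) > 0"
      using u Npos Nupa Skpos W111le by (intro mult_pos_pos add_pos_nonneg) auto
    have dpos: "(m001 + m011 + m101 + m111) * (N - N * ub) > 0"
    proof -
      have "N - N * ub = N * (1 - ub)" by (simp add: algebra_simps)
      then have "N - N * ub > 0" using Npos u by simp
      then show ?thesis using mpos by simp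
    qed
    have npos: "(m010 + m100 + m110) * (N * ub - 1) > 0" using mpos Nua by simp
    show "0 < qb" unfolding qb_eq using dpos npos by simp
    show "qb < 1" unfolding qb_eq using dpos id rpos by simp
  qed
  define Xc where "Xc = N^2/2 * (N^2/2) * (ut * ua * ub * (1 - ut) * (1 - ua) * (1 - ub))"
  have Xc_nn: "Xc \<ge> 0" using u Npos unfolding Xc_def by simp
  have Xc1: "X100 * X011 = Xc" "X101 * X010 = Xc" "X110 * X001 = Xc"
    unfolding Xc_def Xdefs by (simp_all add: field_simps power2_eq_square)
  define Y where "Y = N^2/2 * (ut * ua * ub)"
  have X111le: "X111 \<le> Y" unfolding X111_def Y_def using Npos by simp
  have Y1: "Y * X010 = X110 * X011" "Y * X001 = X101 * X011" unfolding Y_def Xdefs by (simp_all add: field_simps power2_eq_square)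
  have X2: "X111 * X010 \<le> X110 * X011" "X111 * X001 \<le> X101 * X011"
    using mult_right_mono[OF X111le, of X010] mult_right_mono[OF X111le, of X001] Xpos Y1 by auto
  have pp0: "0 \<le> pt" "0 \<le> pa" "0 \<le> pb" using pp by auto
  note WI = w_ineqs[OF pp0(1) pp(2) pp0(2) pp(4) pp0(3) pp(6), folded Wdefs]
  have A1: "m100 * m011 + m110 * m001 - m101 * m010 \<ge> 0"
  proof -
    have e: "m100 * m011 = (X100 * X011) * (pt * W011)" "m110 * m001 = (X110 * X001) * (W110 * pb)"
      "m101 * m010 = (X101 * X010) * (W101 * pa)" unfolding md by (simp_all add: mult_ac)
    have "m100 * m011 + m110 * m001 - m101 * m010 = Xc * (pt * W011 + W110 * pb - W101 * pa)"
      unfolding e Xc1 by (simp add: algebra_simps)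
    then show ?thesis using Xc_nn WI(1) by simp
  qed
  have A2: "m110 * m011 - m111 * m010 \<ge> 0"
  proof -
    have "(X111 * X010) * (W111 * pa) \<le> (X110 * X011) * (W110 * W011)"
      by (rule mult_mono[OF X2(1) WI(2)]) (use Xpos Wpos pp in simp_all)
    moreover have "m110 * m011 = (X110 * X011) * (W110 * W011)" "m111 * m010 = (X111 * X010) * (W111 * pa)"
      unfolding md by (simp_all add: mult_ac)
    ultimately show ?thesis by simp
  qed
  have A3: "m100 * m011 + m101 * m010 - m110 * m001 \<ge> 0"
  proof -
    have e: "m100 * m011 = (X100 * X011) * (pt * W011)" "m110 * m001 = (X110 * X001) * (W110 * pb)"
      "m101 * m010 = (X101 * X010) * (W101 * pa)" unfolding md by (simp_all add: mult_ac)
    have "m100 * m011 + m101 * m010 - m110 * m001 = Xc * (pt * W011 + W101 * pa - W110 * pb)"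
      unfolding e Xc1 by (simp add: algebra_simps)
    then show ?thesis using Xc_nn WI(3) by simp
  qed
  have A4: "m101 * m011 - m111 * m001 \<ge> 0"
  proof -
    have "(X111 * X001) * (W111 * pb) \<le> (X101 * X011) * (W101 * W011)"
      by (rule mult_mono[OF X2(2) WI(4)]) (use Xpos Wpos pp in simp_all)
    moreover have "m101 * m011 = (X101 * X011) * (W101 * W011)" "m111 * m001 = (X111 * X001) * (W111 * pb)"
      unfolding md by (simp_all add: mult_ac)
    ultimately show ?thesis by simp
  qed
  have Ha: "(m100 + m101) * (m010 + m011) > (m110 + m111) * m001"
  proof -
    have "(m100 + m101) * (m010 + m011) - (m110 + m111) * m001
       = m100 * m010 + (m100 * m011 + m101 * m010 - m110 * m001) + (m101 * m011 - m111 * m001)"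
      by (simp add: algebra_simps)
    moreover have "m100 * m010 > 0" using mpos by simp
    ultimately show ?thesis using A3 A4 by linarith
  qed
  have Hb: "(m100 + qa * m110) * (m001 + qa * m011) > (m101 + qa * m111) * (qa * m010)"
  proof -
    have "(m100 + qa * m110) * (m001 + qa * m011) - (m101 + qa * m111) * (qa * m010)
       = m100 * m001 + qa * (m100 * m011 + m110 * m001 - m101 * m010) + (qa * qa) * (m110 * m011 - m111 * m010)"
      by (simp add: algebra_simps)
    moreover have "m100 * m001 > 0" using mpos by simp
    moreover have "qa * (m100 * m011 + m110 * m001 - m101 * m010) \<ge> 0" using A1 qa_bounds by simp
    moreover have "(qa * qa) * (m110 * m011 - m111 * m010) \<ge> 0" using A2 qa_bounds by simp
    ultimately show ?thesis by linarith
  qed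
  have C: "(m100 + m110 + m101 + m111) / ((m100 + m110 + m101 + m111) + (m010 + m001 + m011))
       < (m100 + qa * m110 + qb * m101 + qa * qb * m111) /
         ((m100 + qa * m110 + qb * m101 + qa * qb * m111) + (qa * m010 + qb * m001 + qa * qb * m011))"
    by (rule core[OF mpos qa_bounds qb_bounds Ha Hb])
  have E1: "(m100 + m110 + m101 + m111) + (m010 + m001 + m011) \<noteq> 0" using mpos by linarith
  have E2: "(m100 + qa * m110 + qb * m101 + qa * qb * m111) + (qa * m010 + qb * m001 + qa * qb * m011) \<noteq> 0"
  proof -
    have "qa * m110 > 0" "qb * m101 > 0" "qa * qb * m111 > 0" "qa * m010 > 0" "qb * m001 > 0" "qa * qb * m011 > 0"
      using mpos qa_bounds qb_bounds by simp_all
    then show ?thesis using mpos by linarith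
  qed
  have M1: "modularity N nl ?Ls (edgeprob p) t = (m100 + m110 + m101 + m111) / ((m100 + m110 + m101 + m111) + (m010 + m001 + m011)) - 1 / real (nl t)"
    by (rule modularity_eq[OF fin _ It Ot E1]) (use pos in auto)
  have M2: "modularity N nl ?Ls (reduced_edgeprob N nl ?Ls p {a,b}) t = (m100 + qa * m110 + qb * m101 + qa * qb * m111) /
         ((m100 + qa * m110 + qb * m101 + qa * qb * m111) + (qa * m010 + qb * m001 + qa * qb * m011)) - 1 / real (nl t)"
    by (rule modularity_eq[OF fin _ It' Ot' E2]) (use pos in auto)
  show ?thesis using C M1 M2 unfolding N_def by simp
qed


theorem theorem14:
  fixes n :: nat and nl :: "nat \<Rightarrow> nat" and p :: "nat \<Rightarrow> real" and t :: nat
  assumes "\<forall>l\<in>{0,1,2}. nl l \<ge> 4"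
    and "\<forall>l\<in>{0,1,2}. 0.05 \<le> p l \<and> p l \<le> 1"
    and "n \<ge> 2 * (\<Prod>l\<in>{0,1,2}. nl l)"
    and "t \<in> {0,1,2}"
  shows "modularity (real n) nl {0,1,2}
           (reduced_edgeprob (real n) nl {0,1,2} p ({0,1,2} - {t})) t
         > modularity (real n) nl {0,1,2} (edgeprob p) t"
proof -
  have n4: "nl 0 \<ge> 4" "nl 1 \<ge> 4" "nl 2 \<ge> 4" using assms(1) by auto
  have pr: "0.05 \<le> p 0" "p 0 \<le> 1" "0.05 \<le> p 1" "p 1 \<le> 1" "0.05 \<le> p 2" "p 2 \<le> 1"
    using assms(2) by auto
  have "n \<ge> 2 * (nl 0 * (nl 1 * nl 2))" using assms(3) by simp
  then have "real n \<ge> real (2 * (nl 0 * (nl 1 * nl 2)))" by (simp only: of_nat_le_iff)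
  then have nb: "real n \<ge> 2 * real (nl 0) * real (nl 1) * real (nl 2)" by (simp add: mult_ac)
  have nb1: "real n \<ge> 2 * real (nl 1) * real (nl 0) * real (nl 2)" using nb by (simp add: mult_ac)
  have nb2: "real n \<ge> 2 * real (nl 2) * real (nl 0) * real (nl 1)" using nb by (simp add: mult_ac)
  consider "t = 0" | "t = 1" | "t = 2" using assms(4) by auto
  then show ?thesis
  proof cases
    case 1
    have s: "({0,1,2} :: nat set) - {0} = {1,2}" by auto
    show ?thesis unfolding 1 s
      using main_generic[of 0 1 2 nl p n] n4 pr nb by simp
  next
    case 2
    have s: "({0,1,2} :: nat set) - {1} = {0,2}" by auto
    have L: "({0,1,2} :: nat set) = {1,0,2}" by auto
    show ?thesis unfolding 2 s L
      using main_generic[of 1 0 2 nl p n] n4 pr nb1 by simp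
  next
    case 3
    have s: "({0,1,2} :: nat set) - {2} = {0,1}" by auto
    have L: "({0,1,2} :: nat set) = {2,0,1}" by auto
    show ?thesis unfolding 3 s L
      using main_generic[of 2 0 1 nl p n] n4 pr nb2 by simp
  qed
qed

end
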